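(* Consider the $\lambda$-SAGA algorithm (defined in the context) with fixed $\lambda\in[0,1]$ and positive deterministic step sequence $(\gamma_n)$ that is non-increasing. Assume there is a point $x^*$ with $\nabla f(x^* )=0$ and a constant $L>0$ such that for all $x$, $\tau^2(x)\le L\|x-x^*\|^2$. Define $V_n=\|X_n-x^*\|^2$ and, for $n\ge2$, $T_n=V_n+3N\gamma_{n-1}^2A_n$. Then for all $n\ge2$, almost surely, $$\mathbb E[A_{n+1}\mid\mathcal F_n]=\tfrac1N\tau^2(X_n)+\big(1-\tfrac1N\big)A_n,$$ and $$\mathbb E[T_{n+1}\mid\mathcal F_n]\le(1+6L\gamma_n^2)T_n-2\gamma_n\langle X_n-x^*,\nabla f(X_n)\rangle+3\gamma_n^2\theta^*.$$
   Context: Let $N,d\ge1$ be integers, $f_1,\dots,f_N:\mathbb R^d\to\mathbb R$ differentiable, and $f=\frac1N\sum_{k=1}^N f_k$. The $\lambda$-SAGA algorithm with parameter $\lambda\in[0,1]$ and positive deterministic steps $(\gamma_n)_{n\ge1}$: let $X_0,X_1$ be square-integrable random vectors in $\mathbb R^d$ and $(U_n)_{n\ge2}$ i.i.d. uniform on $\{1,\dots,N\}$, independent of $(X_0,X_1)$. Set $g_{1,k}=\nabla f_k(X_0)$ for $k=1,\dots,N$ and for $n\ge1$: $X_{n+1}=X_n-\gamma_n\Big(\nabla f_{U_{n+1}}(X_n)-\lambda\big(g_{n,U_{n+1}}-\frac1N\sum_{k=1}^N g_{n,k}\big)\Big)$, and $g_{n+1,k}=\nabla f_k(X_n)$ if $U_{n+1}=k$,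 $g_{n+1,k}=g_{n,k}$ otherwise. Let $\mathcal F_n=\sigma(X_0,X_1,U_2,\dots,U_n)$. Define $\phi_{n,k}$ by $\phi_{1,k}=X_0$, $\phi_{n+1,k}=X_n$ if $U_{n+1}=k$ and $\phi_{n+1,k}=\phi_{n,k}$ otherwise (so $g_{n,k}=\nabla f_k(\phi_{n,k})$). Notation: $\tau^2(x)=\frac1N\sum_{k=1}^N\|\nabla f_k(x)-\nabla f_k(x^* )\|^2$, $A_n=\frac1N\sum_{k=1}^N\|\nabla f_k(\phi_{n,k})-\nabla f_k(x^* )\|^2$, $\theta^*=\frac1N\sum_{k=1}^N\|\nabla f_k(x^* )\|^2$. *)

theory Defs
  imports "HOL-Probability.Probability"
begin

definition grad :: "('a::euclidean_space \<Rightarrow> real) \<Rightarrow> 'a \<Rightarrow> 'a" where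
  "grad h x = (SOME D. GDERIV h x :> D)"

(* state of lambda-SAGA at step n: (X_n, \<phi>_n) with \<phi>_n k the point at which g_{n,k} was evaluated;
   f k for k = 1..N are the component functions *)
fun saga_state :: "nat \<Rightarrow> (nat \<Rightarrow> 'a::euclidean_space \<Rightarrow> real) \<Rightarrow> real \<Rightarrow> (nat \<Rightarrow> real)
   \<Rightarrow> ('w \<Rightarrow> 'a) \<Rightarrow> ('w \<Rightarrow> 'a) \<Rightarrow> (nat \<Rightarrow> 'w \<Rightarrow> nat) \<Rightarrow> nat \<Rightarrow> 'w \<Rightarrow> 'a \<times> (nat \<Rightarrow> 'a)" where
  "saga_state N f lam gamma X0 X1 U 0 w = (X0 w, (\<lambda>k. X0 w))"
| "saga_state N f lam gamma X0 X1 U (Suc 0) w = (X1 w, (\<lambda>k. X0 w))"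
| "saga_state N f lam gamma X0 X1 U (Suc (Suc m)) w =
     (let n = Suc m; (x, \<phi>) = saga_state N f lam gamma X0 X1 U n w; u = U (Suc n) w;
          x' = x - gamma n *\<^sub>R (grad (f u) x
                 - lam *\<^sub>R (grad (f u) (\<phi> u) - (1 / real N) *\<^sub>R (\<Sum>k=1..N. grad (f k) (\<phi> k))))
      in (x', \<phi>(u := x)))"

definition saga_X where
  "saga_X N f lam gamma X0 X1 U n w = fst (saga_state N f lam gamma X0 X1 U n w)"

definition saga_phi where
  "saga_phi N f lam gamma X0 X1 U n w = snd (saga_state N f lam gamma X0 X1 U n w)"

definition saga_filtration :: "'w measure \<Rightarrow> ('w \<Rightarrow> 'a::euclidean_space) \<Rightarrow> ('w \<Rightarrow> 'a)
    \<Rightarrow> (nat \<Rightarrow> 'w \<Rightarrow> nat) \<Rightarrow> nat \<Rightarrow> 'w measure" where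
  "saga_filtration M X0 X1 U n = sigma (space M)
     ({X0 -` B \<inter> space M | B. B \<in> sets borel} \<union> {X1 -` B \<inter> space M | B. B \<in> sets borel}
      \<union> {U k -` {j} \<inter> space M | k j. 2 \<le> k \<and> k \<le> n})"

definition tau2 :: "nat \<Rightarrow> (nat \<Rightarrow> 'a::euclidean_space \<Rightarrow> real) \<Rightarrow> 'a \<Rightarrow> 'a \<Rightarrow> real" where
  "tau2 N f xs x = (1 / real N) * (\<Sum>k=1..N. (norm (grad (f k) x - grad (f k) xs))\<^sup>2)"

definition saga_A where
  "saga_A N f lam gamma X0 X1 U xs n w =
     (1 / real N) * (\<Sum>k=1..N. (norm (grad (f k) (saga_phi N f lam gamma X0 X1 U n w k) - grad (f k) xs))\<^sup>2)"

definition theta_star :: "nat \<Rightarrow> (nat \<Rightarrow> 'a::euclidean_space \<Rightarrow> real) \<Rightarrow> 'a \<Rightarrow> real" where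
  "theta_star N f xs = (1 / real N) * (\<Sum>k=1..N. (norm (grad (f k) xs))\<^sup>2)"

definition grad_avg :: "nat \<Rightarrow> (nat \<Rightarrow> 'a::euclidean_space \<Rightarrow> real) \<Rightarrow> 'a \<Rightarrow> 'a" where
  "grad_avg N f x = grad (\<lambda>y. (1 / real N) * (\<Sum>k=1..N. f k y)) x"

definition saga_T where
  "saga_T N f lam gamma X0 X1 U xs n w =
     (norm (saga_X N f lam gamma X0 X1 U n w - xs))\<^sup>2
     + 3 * real N * (gamma (n - 1))\<^sup>2 * saga_A N f lam gamma X0 X1 U xs n w"

end

theory Submission
  imports Defs
begin


lemma grad_exists:
  fixes h :: "'a::euclidean_space \<Rightarrow> real"
  assumes "h differentiable (at x)"
  shows "GDERIV h x :> grad h x"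
proof -
  obtain D where D: "(h has_derivative D) (at x)" using assms differentiable_def by blast
  have lin: "linear D" using D has_derivative_linear by blast
  have "D = (\<lambda>v. inner v (\<Sum>b\<in>Basis. D b *\<^sub>R b))"
  proof
    fix v
    have "D v = D v \<bullet> 1" by simp
    also have "\<dots> = (\<Sum>i\<in>Basis. (v \<bullet> i) * (D i \<bullet> 1))" by (rule Linear_Algebra.linear_componentwise[OF lin])
    also have "\<dots> = inner v (\<Sum>b\<in>Basis. D b *\<^sub>R b)" by (simp add: inner_sum_right mult.commute)
    finally show "D v = inner v (\<Sum>b\<in>Basis. D b *\<^sub>R b)" .
  qed
  then have "GDERIV h x :> (\<Sum>b\<in>Basis. D b *\<^sub>R b)" using D unfolding gderiv_def by simp
  then show ?thesis unfolding grad_def by (rule someI)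
qed

lemma gderiv_unique:
  assumes "GDERIV h x :> D1" "GDERIV h x :> D2"
  shows "D1 = D2"
proof -
  have "(\<lambda>v. inner v D1) = (\<lambda>v. inner v D2)" using assms unfolding gderiv_def by (rule has_derivative_unique)
  then have "inner (D1 - D2) D1 = inner (D1 - D2) D2" by metis
  then have "inner (D1 - D2) (D1 - D2) = 0" by (simp add: inner_diff_right)
  then show ?thesis by simp
qed

lemma grad_eqI: "GDERIV h x :> D \<Longrightarrow> grad h x = D"
  unfolding grad_def by (rule some_equality) (auto intro: gderiv_unique)

lemma grad_avg_eq:
  assumes "\<forall>k\<in>{1..N}. \<forall>x. f k differentiable (at x)"
  shows "grad_avg N f x = (1 / real N) *\<^sub>R (\<Sum>k=1..N. grad (f k) x)"
  unfolding grad_avg_def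
proof (rule grad_eqI)
  have "\<And>k. k \<in> {1..N} \<Longrightarrow> (f k has_derivative (\<lambda>v. inner v (grad (f k) x))) (at x)"
    using grad_exists assms unfolding gderiv_def by blast
  then have "((\<lambda>y. \<Sum>k=1..N. f k y) has_derivative (\<lambda>v. \<Sum>k=1..N. inner v (grad (f k) x))) (at x)"
    by (rule has_derivative_sum)
  then have "((\<lambda>y. (1 / real N) * (\<Sum>k=1..N. f k y)) has_derivative (\<lambda>v. (1 / real N) * (\<Sum>k=1..N. inner v (grad (f k) x)))) (at x)"
    by (rule has_derivative_mult_right)
  then show "GDERIV (\<lambda>y. 1 / real N * (\<Sum>k = 1..N. f k y)) x :> (1 / real N) *\<^sub>R (\<Sum>k=1..N. grad (f k) x)"
    unfolding gderiv_def by (simp add: inner_sum_right)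
qed

lemma grad_component_lim:
  fixes h :: "'a::euclidean_space \<Rightarrow> real"
  assumes "h differentiable (at x)"
  shows "(\<lambda>i. (h (x + (1 / Suc i) *\<^sub>R b) - h x) / (1 / Suc i)) \<longlonglongrightarrow> inner b (grad h x)"
proof -
  have D: "(h has_derivative (\<lambda>v. inner v (grad h x))) (at x)"
    using grad_exists[OF assms] unfolding gderiv_def .
  have "((\<lambda>t. x + t *\<^sub>R b) has_derivative (\<lambda>t. t *\<^sub>R b)) (at 0)"
    by (auto intro!: derivative_eq_intros)
  moreover have "(h has_derivative (\<lambda>v. inner v (grad h x))) (at (x + 0 *\<^sub>R b))" using D by simp
  ultimately have "((\<lambda>t. h (x + t *\<^sub>R b)) has_derivative (\<lambda>t. inner (t *\<^sub>R b) (grad h x))) (at 0)" by (rule has_derivative_compose)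
  then have "((\<lambda>t. h (x + t *\<^sub>R b)) has_real_derivative (inner b (grad h x))) (at 0)"
    unfolding has_field_derivative_def by (simp add: mult.commute[of _ "b \<bullet> grad h x"])
  then have L: "(\<lambda>t. (h (x + t *\<^sub>R b) - h x) / t) \<midarrow>0\<rightarrow> inner b (grad h x)"
    unfolding DERIV_def by simp
  have S: "(\<lambda>i. 1 / real (Suc i)) \<longlonglongrightarrow> 0" by (rule LIMSEQ_Suc[OF lim_inverse_n'])
  have *: "\<And>S. (\<forall>n. S n \<noteq> 0) \<Longrightarrow> S \<longlonglongrightarrow> 0 \<Longrightarrow> (\<lambda>n. (h (x + S n *\<^sub>R b) - h x) / S n) \<longlonglongrightarrow> inner b (grad h x)"
    using L[unfolded LIMSEQ_SEQ_conv[symmetric]] by blast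
  show ?thesis using *[OF _ S] by simp
qed

lemma grad_measurable:
  fixes h :: "'a::euclidean_space \<Rightarrow> real"
  assumes "\<forall>x. h differentiable (at x)"
  shows "grad h \<in> borel_measurable borel"
proof -
  have cont: "continuous_on UNIV h"
    using assms differentiable_imp_continuous_within continuous_at_imp_continuous_on by blast
  have comp: "(\<lambda>x. inner b (grad h x)) \<in> borel_measurable borel" for b
  proof (rule borel_measurable_LIMSEQ_real)
    fix x show "(\<lambda>i. (h (x + (1 / Suc i) *\<^sub>R b) - h x) / (1 / Suc i)) \<longlonglongrightarrow> inner b (grad h x)"
      using grad_component_lim assms by blast
  next
    fix i :: nat
    have "continuous_on UNIV (\<lambda>x. (h (x + (1 / Suc i) *\<^sub>R b) - h x) / (1 / Suc i))"
      by (intro continuous_intros continuous_on_compose2[OF cont]) auto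
    then show "(\<lambda>x. (h (x + (1 / Suc i) *\<^sub>R b) - h x) / (1 / Suc i)) \<in> borel_measurable borel"
      by (rule borel_measurable_continuous_onI)
  qed
  have "grad h = (\<lambda>x. \<Sum>b\<in>Basis. inner b (grad h x) *\<^sub>R b)"
  proof
    fix x
    have "(\<Sum>b\<in>Basis. inner b (grad h x) *\<^sub>R b) = (\<Sum>b\<in>Basis. inner (grad h x) b *\<^sub>R b)"
      by (simp add: inner_commute)
    then show "grad h x = (\<Sum>b\<in>Basis. inner b (grad h x) *\<^sub>R b)" by (simp add: euclidean_representation)
  qed
  also have "\<dots> \<in> borel_measurable borel" using comp by measurable
  finally show ?thesis .
qed




definition sqi :: "'w measure \<Rightarrow> ('w \<Rightarrow> 'b::euclidean_space) \<Rightarrow> bool" where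
  "sqi M Y \<longleftrightarrow> Y \<in> borel_measurable M \<and> integrable M (\<lambda>w. (norm (Y w))\<^sup>2)"

lemma sq_add_le: "(norm ((a::'b::real_normed_vector) + b))\<^sup>2 \<le> 2 * (norm a)\<^sup>2 + 2 * (norm b)\<^sup>2"
proof -
  have "norm (a + b) \<le> norm a + norm b" by (rule norm_triangle_ineq)
  then have "(norm (a + b))\<^sup>2 \<le> (norm a + norm b)\<^sup>2" by (simp add: power_mono)
  also have "\<dots> \<le> 2 * (norm a)\<^sup>2 + 2 * (norm b)\<^sup>2"
  proof -
    have "0 \<le> (norm a - norm b)\<^sup>2" by simp
    moreover have "(norm a - norm b)\<^sup>2 = (norm a)\<^sup>2 - 2 * norm a * norm b + (norm b)\<^sup>2"
      "(norm a + norm b)\<^sup>2 = (norm a)\<^sup>2 + 2 * norm a * norm b + (norm b)\<^sup>2"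
      by (simp_all add: power2_eq_square algebra_simps)
    ultimately show ?thesis by linarith
  qed
  finally show ?thesis .
qed

lemma sq_diff_le: "(norm ((a::'b::real_normed_vector) - b))\<^sup>2 \<le> 2 * (norm a)\<^sup>2 + 2 * (norm b)\<^sup>2"
  using sq_add_le[of a "-b"] by simp

lemma sqi_const: "finite_measure M \<Longrightarrow> sqi M (\<lambda>w. c)"
  unfolding sqi_def by (auto intro: finite_measure.integrable_const)

lemma sqi_add:
  assumes "sqi M Y" "sqi M Z" shows "sqi M (\<lambda>w. Y w + Z w)"
  unfolding sqi_def
proof
  show m: "(\<lambda>w. Y w + Z w) \<in> borel_measurable M" using assms unfolding sqi_def by auto
  have "integrable M (\<lambda>w. 2 * (norm (Y w))\<^sup>2 + 2 * (norm (Z w))\<^sup>2)" using assms unfolding sqi_def by auto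
  then show "integrable M (\<lambda>w. (norm (Y w + Z w))\<^sup>2)"
  proof (rule Bochner_Integration.integrable_bound)
    show "AE x in M. norm ((norm (Y x + Z x))\<^sup>2) \<le> norm (2 * (norm (Y x))\<^sup>2 + 2 * (norm (Z x))\<^sup>2)"
      using sq_add_le[of "Y _" "Z _"] by (intro AE_I2) simp
  qed (use m in simp)
qed

lemma sqi_diff:
  assumes "sqi M Y" "sqi M Z" shows "sqi M (\<lambda>w. Y w - Z w)"
  unfolding sqi_def
proof
  show m: "(\<lambda>w. Y w - Z w) \<in> borel_measurable M" using assms unfolding sqi_def by auto
  have "integrable M (\<lambda>w. 2 * (norm (Y w))\<^sup>2 + 2 * (norm (Z w))\<^sup>2)" using assms unfolding sqi_def by auto
  then show "integrable M (\<lambda>w. (norm (Y w - Z w))\<^sup>2)"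
  proof (rule Bochner_Integration.integrable_bound)
    show "AE x in M. norm ((norm (Y x - Z x))\<^sup>2) \<le> norm (2 * (norm (Y x))\<^sup>2 + 2 * (norm (Z x))\<^sup>2)"
      using sq_diff_le[of "Y _" "Z _"] by (intro AE_I2) simp
  qed (use m in simp)
qed

lemma sqi_scaleR:
  assumes "sqi M Y" shows "sqi M (\<lambda>w. c *\<^sub>R Y w)"
  using assms unfolding sqi_def by (auto simp: power_mult_distrib)

lemma sqi_sum:
  assumes "finite I" "\<And>i. i \<in> I \<Longrightarrow> sqi M (Y i)" "finite_measure M"
  shows "sqi M (\<lambda>w. \<Sum>i\<in>I. Y i w)"
  using assms
proof (induction I rule: finite_induct)
  case empty then show ?case using sqi_const[of M 0] by simp
next
  case (insert x F)
  then show ?case by (simp add: sqi_add)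
qed

lemma sqi_if:
  assumes "sqi M Y" "sqi M Z" "{w \<in> space M. P w} \<in> sets M"
  shows "sqi M (\<lambda>w. if P w then Y w else Z w)"
  unfolding sqi_def
proof
  have [measurable]: "Y \<in> borel_measurable M" "Z \<in> borel_measurable M" using assms unfolding sqi_def by auto
  have [measurable]: "Measurable.pred M P" using assms(3) by (simp add: pred_def)
  show m: "(\<lambda>w. if P w then Y w else Z w) \<in> borel_measurable M" by measurable
  have "integrable M (\<lambda>w. (norm (Y w))\<^sup>2 + (norm (Z w))\<^sup>2)" using assms unfolding sqi_def by auto
  then show "integrable M (\<lambda>w. (norm (if P w then Y w else Z w))\<^sup>2)"
  proof (rule Bochner_Integration.integrable_bound)
    show "AE x in M. norm ((norm (if P x then Y x else Z x))\<^sup>2) \<le> norm ((norm (Y x))\<^sup>2 + (norm (Z x))\<^sup>2)"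
      by (intro AE_I2) simp
  qed (use m in simp)
qed

lemma sqi_sel:
  fixes u :: "'w \<Rightarrow> nat"
  assumes "finite I" "u \<in> measurable M (count_space I)" "\<And>j. j \<in> I \<Longrightarrow> sqi M (Y j)"
  shows "sqi M (\<lambda>w. Y (u w) w)"
  unfolding sqi_def
proof
  show m: "(\<lambda>w. Y (u w) w) \<in> borel_measurable M"
  proof (rule measurable_compose_countable'[OF _ assms(2)])
    show "countable I" using assms(1) by (rule countable_finite)
    fix j assume "j \<in> I" then show "Y j \<in> borel_measurable M" using assms(3) unfolding sqi_def by blast
  qed
  have intS: "integrable M (\<lambda>w. \<Sum>j\<in>I. (norm (Y j w))\<^sup>2)" using assms(3) unfolding sqi_def
    by (intro Bochner_Integration.integrable_sum) blast
  have bnd: "\<And>w. w \<in> space M \<Longrightarrow> (norm (Y (u w) w))\<^sup>2 \<le> (\<Sum>j\<in>I. (norm (Y j w))\<^sup>2)"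
    using assms(1) measurable_space[OF assms(2)]
    by (intro member_le_sum) (auto simp: measurable_def)
  show "integrable M (\<lambda>w. (norm (Y (u w) w))\<^sup>2)"
  proof (rule Bochner_Integration.integrable_bound[OF intS _ AE_I2])
    fix w assume "w \<in> space M"
    with bnd show "norm ((norm (Y (u w) w))\<^sup>2) \<le> norm (\<Sum>j\<in>I. (norm (Y j w))\<^sup>2)" by (simp add: sum_nonneg)
  qed (use m in simp)
qed

lemma sqi_comp:
  assumes "finite_measure M" "sqi M Y" "g \<in> borel_measurable borel" "\<And>y. (norm (g y))\<^sup>2 \<le> a + b * (norm y)\<^sup>2"
    "0 \<le> b"
  shows "sqi M (\<lambda>w. g (Y w))"
  unfolding sqi_def
proof
  show m: "(\<lambda>w. g (Y w)) \<in> borel_measurable M" using assms(2,3) unfolding sqi_def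
    by (auto intro: measurable_compose)
  have intS: "integrable M (\<lambda>w. a + b * (norm (Y w))\<^sup>2)" using assms unfolding sqi_def
    by (auto intro!: Bochner_Integration.integrable_add finite_measure.integrable_const)
  have bnd: "\<And>w. (norm (g (Y w)))\<^sup>2 \<le> \<bar>a + b * (norm (Y w))\<^sup>2\<bar>"
    using assms(4) abs_ge_self order_trans by blast
  show "integrable M (\<lambda>w. (norm (g (Y w)))\<^sup>2)"
  proof (rule Bochner_Integration.integrable_bound[OF intS _ AE_I2])
    fix w
    from bnd show "norm ((norm (g (Y w)))\<^sup>2) \<le> norm (a + b * (norm (Y w))\<^sup>2)" by simp
  qed (use m in simp)
qed




lemma (in sigma_finite_subalgebra) cond_exp_select:
  fixes u :: "'a \<Rightarrow> nat" and h :: "nat \<Rightarrow> 'a \<Rightarrow> real"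
  assumes u: "u \<in> measurable M (count_space UNIV)" "\<And>w. w \<in> space M \<Longrightarrow> u w \<in> {1..N}"
  and ind: "\<And>Y j. Y \<in> borel_measurable F \<Longrightarrow> integrable M Y \<Longrightarrow> j \<in> {1..N} \<Longrightarrow>
        (\<integral>w. indicator {w\<in>space M. u w = j} w * Y w \<partial>M) = (\<integral>w. Y w \<partial>M) / real N"
  and hF: "\<And>j. j \<in> {1..N} \<Longrightarrow> h j \<in> borel_measurable F"
  and hI: "\<And>j. j \<in> {1..N} \<Longrightarrow> integrable M (h j)"
  shows "AE w in M. real_cond_exp M F (\<lambda>w. h (u w) w) w = (1 / real N) * (\<Sum>j=1..N. h j w)"
proof -
  define E where "E j = {w\<in>space M. u w = j}" for j
  have E[measurable]: "E j \<in> sets M" for j unfolding E_def using u(1) by measurable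
  have hM: "h j \<in> borel_measurable M" if "j \<in> {1..N}" for j
    using hF[OF that] measurable_from_subalg[OF subalg] by blast
  have eq: "h (u w) w = (\<Sum>j=1..N. indicator (E j) w * h j w)" if "w \<in> space M" for w
  proof -
    have "(\<Sum>j=1..N. indicator (E j) w * h j w) = (\<Sum>j\<in>{1..N}. if u w = j then h j w else 0)"
      by (intro sum.cong) (auto simp: E_def that indicator_def)
    also have "\<dots> = h (u w) w" using u(2)[OF that] by (simp add: sum.delta)
    finally show ?thesis by simp
  qed
  have intS: "integrable M (\<lambda>w. \<Sum>j=1..N. indicator (E j) w * h j w)"
  proof (rule Bochner_Integration.integrable_sum)
    fix j assume "j \<in> {1..N}"
    show "integrable M (\<lambda>x. indicator (E j) x * h j x)"
      using integrable_mult_indicator[OF E[of j] hI[OF \<open>j \<in> {1..N}\<close>]] by simp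
  qed
  have int: "integrable M (\<lambda>w. h (u w) w)"
    using intS by (subst Bochner_Integration.integrable_cong[OF refl eq]) auto
  have intg: "integrable M (\<lambda>w. (1 / real N) * (\<Sum>j=1..N. h j w))"
    using hI by (intro integrable_mult_right Bochner_Integration.integrable_sum) auto
  have gF: "(\<lambda>w. (1 / real N) * (\<Sum>j=1..N. h j w)) \<in> borel_measurable F"
    using hF by (intro borel_measurable_times borel_measurable_const borel_measurable_sum) auto
  show ?thesis
  proof (rule real_cond_exp_charact[OF _ int intg gF])
    fix A assume AF: "A \<in> sets F"
    then have AM: "A \<in> sets M" using subalg by (meson subalgebra_def subsetD)
    have YF: "(\<lambda>x. indicator A x * h j x) \<in> borel_measurable F" if "j \<in> {1..N}" for j
      using AF hF[OF that] by (intro borel_measurable_times) auto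
    have YI: "integrable M (\<lambda>x. indicator A x * h j x)" if "j \<in> {1..N}" for j
      using integrable_mult_indicator[OF AM hI[OF that]] by simp
    have "(\<integral>x\<in>A. h (u x) x \<partial>M) = (\<integral>x. indicator A x * h (u x) x \<partial>M)"
      by (simp add: set_lebesgue_integral_def)
    also have "\<dots> = (\<integral>x. (\<Sum>j=1..N. indicator (E j) x * (indicator A x * h j x)) \<partial>M)"
      by (intro Bochner_Integration.integral_cong refl)
         (simp add: eq sum_distrib_left mult.left_commute conj_commute conj_left_commute)
    also have "\<dots> = (\<Sum>j=1..N. (\<integral>x. indicator (E j) x * (indicator A x * h j x) \<partial>M))"
    proof (rule Bochner_Integration.integral_sum)
      fix j assume "j \<in> {1..N}"
      show "integrable M (\<lambda>x. indicator (E j) x * (indicator A x * h j x))"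
        using integrable_mult_indicator[OF E[of j] YI[OF \<open>j \<in> {1..N}\<close>]] by simp
    qed
    also have "\<dots> = (\<Sum>j=1..N. (\<integral>x. indicator A x * h j x \<partial>M) / real N)"
      by (intro sum.cong refl) (use ind[OF YF YI] in \<open>auto simp: E_def\<close>)
    also have "\<dots> = (\<integral>x. indicator A x * ((1 / real N) * (\<Sum>j=1..N. h j x)) \<partial>M)"
    proof -
      have "(\<integral>x. (\<Sum>j=1..N. indicator A x * h j x) \<partial>M) = (\<Sum>j=1..N. (\<integral>x. indicator A x * h j x \<partial>M))"
        by (rule Bochner_Integration.integral_sum) (rule YI)
      then have "(\<Sum>j=1..N. (\<integral>x. indicator A x * h j x \<partial>M) / real N) = (\<integral>x. (\<Sum>j=1..N. indicator A x * h j x) \<partial>M) / real N"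
        by (simp add: sum_divide_distrib)
      also have "\<dots> = (\<integral>x. (\<Sum>j=1..N. indicator A x * h j x) / real N \<partial>M)"
        by simp
      also have "\<dots> = (\<integral>x. indicator A x * ((1 / real N) * (\<Sum>j=1..N. h j x)) \<partial>M)"
        by (intro Bochner_Integration.integral_cong refl) (simp only: sum_distrib_left[symmetric] mult.assoc times_divide_eq_left divide_inverse mult.commute mult.left_commute div_by_1)
      finally show ?thesis .
    qed
    also have "\<dots> = (\<integral>x\<in>A. (1 / real N) * (\<Sum>j=1..N. h j x) \<partial>M)"
      by (simp add: set_lebesgue_integral_def)
    finally show "(\<integral>x\<in>A. h (u x) x \<partial>M) = (\<integral>x\<in>A. (1 / real N) * (\<Sum>j=1..N. h j x) \<partial>M)" .
  qed
qed




lemma norm_sub_scale_sq: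
  fixes u v :: "'v::real_inner"
  shows "(norm (u - t *\<^sub>R v))\<^sup>2 = (norm u)\<^sup>2 - 2 * t * inner u v + t\<^sup>2 * (norm v)\<^sup>2"
  unfolding power2_norm_eq_inner by (simp add: inner_diff_left inner_diff_right inner_commute algebra_simps power2_eq_square)

lemma sq3_le:
  fixes p q r :: "'v::real_normed_vector"
  shows "(norm (p + q + r))\<^sup>2 \<le> 3 * ((norm p)\<^sup>2 + (norm q)\<^sup>2 + (norm r)\<^sup>2)"
proof -
  have "norm (p + q + r) \<le> norm p + norm q + norm r"
    by (metis add_mono norm_triangle_ineq order_trans order_refl)
  then have "(norm (p + q + r))\<^sup>2 \<le> (norm p + norm q + norm r)\<^sup>2" by (simp add: power_mono)
  also have "\<dots> \<le> 3 * ((norm p)\<^sup>2 + (norm q)\<^sup>2 + (norm r)\<^sup>2)"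
  proof -
    have "0 \<le> (norm p - norm q)\<^sup>2 + (norm q - norm r)\<^sup>2 + (norm p - norm r)\<^sup>2" by simp
    then show ?thesis by (simp add: power2_eq_square algebra_simps)
  qed
  finally show ?thesis .
qed

lemma var_le:
  fixes v :: "nat \<Rightarrow> 'v::real_inner"
  assumes "N \<ge> 1"
  shows "(\<Sum>j=1..N. (norm (v j - (1 / real N) *\<^sub>R (\<Sum>k=1..N. v k)))\<^sup>2) \<le> (\<Sum>j=1..N. (norm (v j))\<^sup>2)"
proof -
  define m where "m = (1 / real N) *\<^sub>R (\<Sum>k=1..N. v k)"
  have S: "(\<Sum>k=1..N. v k) = real N *\<^sub>R m" unfolding m_def using assms by simp
  have "(\<Sum>j=1..N. (norm (v j - m))\<^sup>2) = (\<Sum>j=1..N. (norm (v j))\<^sup>2 - 2 * inner (v j) m + (norm m)\<^sup>2)"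
    using norm_sub_scale_sq[of "v _" 1 m] by simp
  also have "\<dots> = (\<Sum>j=1..N. (norm (v j))\<^sup>2) - 2 * inner (\<Sum>j=1..N. v j) m + real N * (norm m)\<^sup>2"
    by (simp add: sum.distrib sum_subtractf inner_sum_left sum_distrib_left)
  also have "\<dots> = (\<Sum>j=1..N. (norm (v j))\<^sup>2) - real N * (norm m)\<^sup>2"
    unfolding S by (simp add: power2_norm_eq_inner)
  also have "\<dots> \<le> (\<Sum>j=1..N. (norm (v j))\<^sup>2)" by simp
  finally show ?thesis unfolding m_def .
qed

lemma main_alg:
  fixes a b c :: "nat \<Rightarrow> 'v::real_inner" and x xs :: 'v and g lam :: real
  assumes N: "N \<ge> 1" and cbar: "(\<Sum>j=1..N. c j) = 0" and lam: "0 \<le> lam" "lam \<le> 1"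
  shows "(1 / real N) * (\<Sum>j=1..N. (norm (x - g *\<^sub>R (a j - lam *\<^sub>R (b j - (1 / real N) *\<^sub>R (\<Sum>k=1..N. b k))) - xs))\<^sup>2)
     \<le> (norm (x - xs))\<^sup>2 - 2 * g * inner (x - xs) ((1 / real N) *\<^sub>R (\<Sum>j=1..N. a j))
       + 3 * g\<^sup>2 * ((1 / real N) * (\<Sum>j=1..N. (norm (a j - c j))\<^sup>2) + (1 / real N) * (\<Sum>j=1..N. (norm (c j))\<^sup>2)
                     + (1 / real N) * (\<Sum>j=1..N. (norm (b j - c j))\<^sup>2))"
proof -
  define bbar where "bbar = (1 / real N) *\<^sub>R (\<Sum>k=1..N. b k)"
  define G where "G j = a j - lam *\<^sub>R (b j - bbar)" for j
  have Nr: "real N > 0" using N by simp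
  have bb: "(\<Sum>k=1..N. b k) = real N *\<^sub>R bbar" unfolding bbar_def using N by simp
  have bbar2: "bbar = (1 / real N) *\<^sub>R (\<Sum>k=1..N. b k - c k)"
    unfolding bbar_def using cbar by (simp add: sum_subtractf)
  have e1: "(norm (x - g *\<^sub>R G j - xs))\<^sup>2 = (norm (x - xs))\<^sup>2 - 2 * g * inner (x - xs) (G j) + g\<^sup>2 * (norm (G j))\<^sup>2" for j
    using norm_sub_scale_sq[of "x - xs" g "G j"] by (simp add: algebra_simps)
  have sG: "(\<Sum>j=1..N. G j) = (\<Sum>j=1..N. a j)"
    unfolding G_def using bb by (simp add: sum_subtractf scaleR_sum_right[symmetric] sum_constant_scaleR)
  have G3: "(norm (G j))\<^sup>2 \<le> 3 * ((norm (a j - c j))\<^sup>2 + (norm (c j))\<^sup>2 + (norm ((b j - c j) - bbar))\<^sup>2)" for j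
  proof -
    have "G j = (a j - c j) + (1 - lam) *\<^sub>R c j + (- lam) *\<^sub>R ((b j - c j) - bbar)"
      unfolding G_def by (simp add: algebra_simps)
    then have h1: "(norm (G j))\<^sup>2 \<le> 3 * ((norm (a j - c j))\<^sup>2 + (norm ((1 - lam) *\<^sub>R c j))\<^sup>2 + (norm ((- lam) *\<^sub>R ((b j - c j) - bbar)))\<^sup>2)"
      using sq3_le by metis
    have h2: "(norm ((- lam) *\<^sub>R ((b j - c j) - bbar)))\<^sup>2 \<le> (norm ((b j - c j) - bbar))\<^sup>2"
    proof -
      have "(norm ((- lam) *\<^sub>R ((b j - c j) - bbar)))\<^sup>2 = lam\<^sup>2 * (norm ((b j - c j) - bbar))\<^sup>2"
        by (simp add: power_mult_distrib)
      moreover have "lam\<^sup>2 \<le> 1" using lam by (simp add: power_le_one)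
      ultimately show ?thesis by (simp add: mult_left_le_one_le)
    qed
    have h3: "(norm ((1 - lam) *\<^sub>R c j))\<^sup>2 \<le> (norm (c j))\<^sup>2"
    proof -
      have "(norm ((1 - lam) *\<^sub>R c j))\<^sup>2 = (1 - lam)\<^sup>2 * (norm (c j))\<^sup>2"
        by (simp add: power_mult_distrib)
      moreover have "(1 - lam)\<^sup>2 \<le> 1" using lam by (simp add: power_le_one)
      ultimately show ?thesis by (simp add: mult_left_le_one_le)
    qed
    show ?thesis
      by (rule order_trans[OF h1], rule mult_left_mono[OF add_mono[OF add_mono[OF order_refl h3] h2]]) simp
  qed
  have V: "(\<Sum>j=1..N. (norm ((b j - c j) - bbar))\<^sup>2) \<le> (\<Sum>j=1..N. (norm (b j - c j))\<^sup>2)"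
    unfolding bbar2 using var_le[OF N, of "\<lambda>j. b j - c j"] by simp
  have "(\<Sum>j=1..N. (norm (x - g *\<^sub>R G j - xs))\<^sup>2)
      = real N * (norm (x - xs))\<^sup>2 - 2 * g * inner (x - xs) (\<Sum>j=1..N. a j) + g\<^sup>2 * (\<Sum>j=1..N. (norm (G j))\<^sup>2)"
  proof -
    have "(\<Sum>j=1..N. 2 * g * inner (x - xs) (G j)) = 2 * g * inner (x - xs) (\<Sum>j=1..N. G j)"
      by (simp add: sum_distrib_left inner_sum_right)
    then show ?thesis unfolding e1 sG by (simp add: sum.distrib sum_subtractf sum_distrib_left)
  qed
  also have "\<dots> \<le> real N * (norm (x - xs))\<^sup>2 - 2 * g * inner (x - xs) (\<Sum>j=1..N. a j)
      + g\<^sup>2 * (3 * ((\<Sum>j=1..N. (norm (a j - c j))\<^sup>2) + (\<Sum>j=1..N. (norm (c j))\<^sup>2) + (\<Sum>j=1..N. (norm (b j - c j))\<^sup>2)))"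
  proof -
    have "(\<Sum>j=1..N. (norm (G j))\<^sup>2) \<le> (\<Sum>j=1..N. 3 * ((norm (a j - c j))\<^sup>2 + (norm (c j))\<^sup>2 + (norm ((b j - c j) - bbar))\<^sup>2))"
      by (intro sum_mono G3)
    also have "\<dots> = 3 * ((\<Sum>j=1..N. (norm (a j - c j))\<^sup>2) + (\<Sum>j=1..N. (norm (c j))\<^sup>2) + (\<Sum>j=1..N. (norm ((b j - c j) - bbar))\<^sup>2))"
      by (simp add: sum.distrib sum_distrib_left)
    also have "\<dots> \<le> 3 * ((\<Sum>j=1..N. (norm (a j - c j))\<^sup>2) + (\<Sum>j=1..N. (norm (c j))\<^sup>2) + (\<Sum>j=1..N. (norm (b j - c j))\<^sup>2))"
      using V by simp
    finally show ?thesis by (intro add_left_mono mult_left_mono) auto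
  qed
  finally have main: "(\<Sum>j=1..N. (norm (x - g *\<^sub>R G j - xs))\<^sup>2) \<le> real N * (norm (x - xs))\<^sup>2 - 2 * g * inner (x - xs) (\<Sum>j=1..N. a j)
      + g\<^sup>2 * (3 * ((\<Sum>j=1..N. (norm (a j - c j))\<^sup>2) + (\<Sum>j=1..N. (norm (c j))\<^sup>2) + (\<Sum>j=1..N. (norm (b j - c j))\<^sup>2)))" .
  have "(1 / real N) * (\<Sum>j=1..N. (norm (x - g *\<^sub>R G j - xs))\<^sup>2) \<le> (1 / real N) * (real N * (norm (x - xs))\<^sup>2 - 2 * g * inner (x - xs) (\<Sum>j=1..N. a j)
      + g\<^sup>2 * (3 * ((\<Sum>j=1..N. (norm (a j - c j))\<^sup>2) + (\<Sum>j=1..N. (norm (c j))\<^sup>2) + (\<Sum>j=1..N. (norm (b j - c j))\<^sup>2))))"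
    using main Nr by (intro mult_left_mono) auto
  also have "\<dots> = (norm (x - xs))\<^sup>2 - 2 * g * inner (x - xs) ((1 / real N) *\<^sub>R (\<Sum>j=1..N. a j))
       + 3 * g\<^sup>2 * ((1 / real N) * (\<Sum>j=1..N. (norm (a j - c j))\<^sup>2) + (1 / real N) * (\<Sum>j=1..N. (norm (c j))\<^sup>2)
                     + (1 / real N) * (\<Sum>j=1..N. (norm (b j - c j))\<^sup>2))"
    using Nr by (simp add: field_simps)
  finally show ?thesis unfolding G_def bbar_def .
qed

lemma alg_A:
  fixes d e :: "nat \<Rightarrow> real"
  assumes N: "N \<ge> 1"
  shows "(1 / real N) * (\<Sum>j=1..N. (1 / real N) * (\<Sum>k=1..N. (if k = j then e k else d k)))
       = (1 / real N) * ((1 / real N) * (\<Sum>k=1..N. e k)) + (1 - 1 / real N) * ((1 / real N) * (\<Sum>k=1..N. d k))"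
proof -
  have "(\<Sum>k=1..N. (if k = j then e k else d k)) = (\<Sum>k=1..N. d k) + (e j - d j)" if "j \<in> {1..N}" for j
  proof -
    have "(\<Sum>k=1..N. (if k = j then e k else d k)) = (\<Sum>k=1..N. d k + (if k = j then e k - d k else 0))"
      by (intro sum.cong) auto
    also have "\<dots> = (\<Sum>k=1..N. d k) + (e j - d j)"
      using that by (simp add: sum.distrib sum.delta)
    finally show ?thesis .
  qed
  then have "(\<Sum>j=1..N. (\<Sum>k=1..N. (if k = j then e k else d k))) = (\<Sum>j=1..N. (\<Sum>k=1..N. d k) + (e j - d j))"
    by (intro sum.cong) auto
  also have "\<dots> = real N * (\<Sum>k=1..N. d k) + (\<Sum>k=1..N. e k) - (\<Sum>k=1..N. d k)"
    by (simp add: sum.distrib sum_subtractf)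
  finally have "(\<Sum>j=1..N. (\<Sum>k=1..N. (if k = j then e k else d k))) = real N * (\<Sum>k=1..N. d k) + (\<Sum>k=1..N. e k) - (\<Sum>k=1..N. d k)" .
  moreover have "(\<Sum>j=1..N. (1 / real N) * (\<Sum>k=1..N. (if k = j then e k else d k)))
      = (1 / real N) * (\<Sum>j=1..N. (\<Sum>k=1..N. (if k = j then e k else d k)))"
    by (simp add: sum_distrib_left)
  ultimately show ?thesis using N by (simp add: field_simps)
qed


lemma fin_alg:
  fixes V I tau th A g g' L Nr :: real
  assumes "Nr \<ge> 1" "0 \<le> A" "tau \<le> L * V" "0 < g" "g \<le> g'" "0 < L"
  shows "V - 2 * g * I + 3 * g\<^sup>2 * (tau + th + A) + 3 * Nr * g\<^sup>2 * ((1 / Nr) * tau + (1 - 1 / Nr) * A)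
     \<le> (1 + 6 * L * g\<^sup>2) * (V + 3 * Nr * g'\<^sup>2 * A) - 2 * g * I + 3 * g\<^sup>2 * th"
proof -
  have h1: "g\<^sup>2 * tau \<le> g\<^sup>2 * (L * V)" using assms by (intro mult_left_mono) auto
  have gg: "g\<^sup>2 \<le> g'\<^sup>2" using assms by (intro power_mono) auto
  have h2: "Nr * g\<^sup>2 * A \<le> Nr * g'\<^sup>2 * A" using assms gg by (intro mult_right_mono mult_left_mono) auto
  have h3: "0 \<le> L * g\<^sup>2 * (Nr * g'\<^sup>2 * A)" using assms by simp
  have l: "V - 2 * g * I + 3 * g\<^sup>2 * (tau + th + A) + 3 * Nr * g\<^sup>2 * ((1 / Nr) * tau + (1 - 1 / Nr) * A)
     = V - 2 * g * I + 6 * (g\<^sup>2 * tau) + 3 * g\<^sup>2 * th + 3 * (Nr * g\<^sup>2 * A)"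
    using assms by (simp add: field_simps)
  have r: "(1 + 6 * L * g\<^sup>2) * (V + 3 * Nr * g'\<^sup>2 * A) - 2 * g * I + 3 * g\<^sup>2 * th
     = V + 6 * (g\<^sup>2 * (L * V)) + 3 * (Nr * g'\<^sup>2 * A) + 18 * (L * g\<^sup>2 * (Nr * g'\<^sup>2 * A)) - 2 * g * I + 3 * g\<^sup>2 * th"
    by (simp add: algebra_simps)
  show ?thesis unfolding l r using h1 h2 h3 by linarith
qed




locale saga = prob_space M
  for M :: "'w measure" +
  fixes N :: nat and f :: "nat \<Rightarrow> 'a::euclidean_space \<Rightarrow> real"
    and lam :: real and gamma :: "nat \<Rightarrow> real" and X0 X1 :: "'w \<Rightarrow> 'a"
    and U :: "nat \<Rightarrow> 'w \<Rightarrow> nat" and xs :: 'a and L :: real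
  assumes N1: "N \<ge> 1"
    and diff: "\<forall>k\<in>{1..N}. \<forall>x. f k differentiable (at x)"
    and lam0: "0 \<le> lam" and lam1: "lam \<le> 1"
    and gpos: "\<forall>n\<ge>1. gamma n > 0"
    and gmono: "\<forall>n\<ge>1. gamma (Suc n) \<le> gamma n"
    and X0m: "X0 \<in> borel_measurable M" and X1m: "X1 \<in> borel_measurable M"
    and X0i: "integrable M (\<lambda>w. (norm (X0 w))\<^sup>2)" and X1i: "integrable M (\<lambda>w. (norm (X1 w))\<^sup>2)"
    and Um: "\<forall>n\<ge>2. U n \<in> measurable M (count_space UNIV)"
    and Ur: "\<forall>n\<ge>2. \<forall>w\<in>space M. U n w \<in> {1..N}"
    and Up: "\<forall>n\<ge>2. \<forall>j\<in>{1..N}. measure M {w \<in> space M. U n w = j} = 1 / real N"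
    and indep: "indep_sets
           (\<lambda>i. if i = 0 then {(\<lambda>w. (X0 w, X1 w)) -` B \<inter> space M | B. B \<in> sets borel}
                 else {U i -` B \<inter> space M | B. B \<subseteq> (UNIV :: nat set)})
           ({0} \<union> {2..})"
    and gavg: "grad_avg N f xs = 0"
    and Lpos: "L > 0"
    and tau: "\<forall>x. tau2 N f xs x \<le> L * (norm (x - xs))\<^sup>2"
begin

abbreviation "X m \<equiv> saga_X N f lam gamma X0 X1 U m"
abbreviation "Phi m \<equiv> saga_phi N f lam gamma X0 X1 U m"
abbreviation "gr k \<equiv> grad (f k)"
abbreviation "FF n \<equiv> saga_filtration M X0 X1 U n"

lemma X_Suc:
  assumes "1 \<le> m"
  shows "X (Suc m) w = X m w - gamma m *\<^sub>R (gr (U (Suc m) w) (X m w)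
          - lam *\<^sub>R (gr (U (Suc m) w) (Phi m w (U (Suc m) w)) - (1 / real N) *\<^sub>R (\<Sum>k=1..N. gr k (Phi m w k))))"
proof -
  obtain m' where m: "m = Suc m'" using assms by (cases m) auto
  show ?thesis unfolding m saga_X_def saga_phi_def
    by (simp add: Let_def split: prod.splits)
qed

lemma Phi_Suc:
  assumes "1 \<le> m"
  shows "Phi (Suc m) w = (Phi m w)(U (Suc m) w := X m w)"
proof -
  obtain m' where m: "m = Suc m'" using assms by (cases m) auto
  show ?thesis unfolding m saga_X_def saga_phi_def
    by (simp add: Let_def split: prod.splits)
qed

lemma X_0: "X 0 w = X0 w" and X_1: "X 1 w = X1 w" and Phi_1: "Phi 1 w = (\<lambda>k. X0 w)"
  by (simp_all add: saga_X_def saga_phi_def)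

definition "Gen n = {X0 -` B \<inter> space M | B. B \<in> sets borel} \<union> {X1 -` B \<inter> space M | B. B \<in> sets borel}
      \<union> {U k -` {j} \<inter> space M | k j. 2 \<le> k \<and> k \<le> n}"

lemma Gen_Pow: "Gen n \<subseteq> Pow (space M)" unfolding Gen_def by auto

lemma FF_sets: "sets (FF n) = sigma_sets (space M) (Gen n)"
  unfolding saga_filtration_def Gen_def[symmetric] using Gen_Pow by (rule sets_measure_of)

lemma FF_space: "space (FF n) = space M"
  unfolding saga_filtration_def Gen_def[symmetric] using Gen_Pow by simp

lemma Gen_sets: "Gen n \<subseteq> sets M"
proof -
  have "X0 -` B \<inter> space M \<in> sets M" if "B \<in> sets borel" for B using X0m that by (rule measurable_sets)
  moreover have "X1 -` B \<inter> space M \<in> sets M" if "B \<in> sets borel" for B using X1m that by (rule measurable_sets)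
  moreover have "U k -` {j} \<inter> space M \<in> sets M" if "2 \<le> k" for k j
    using Um that by (intro measurable_sets[of _ M "count_space UNIV"]) auto
  ultimately show ?thesis unfolding Gen_def by auto
qed

lemma subalg: "subalgebra M (FF n)"
  unfolding subalgebra_def FF_space FF_sets using Gen_sets by (simp add: sets.sigma_sets_subset)

lemma sfs: "sigma_finite_subalgebra M (FF n)"
proof (rule finite_measure_subalgebra_is_sigma_finite)
  show "finite_measure_subalgebra M (FF n)"
    by unfold_locales (rule subalg)
qed

lemma Gen_FF: "A \<in> Gen n \<Longrightarrow> A \<in> sets (FF n)"
  unfolding FF_sets by auto

lemma X0_FF: "X0 \<in> borel_measurable (FF n)"
proof (rule measurableI)
  fix A :: "'a set" assume "A \<in> sets borel"
  then have "X0 -` A \<inter> space M \<in> Gen n" unfolding Gen_def by blast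
  then show "X0 -` A \<inter> space (FF n) \<in> sets (FF n)" by (simp add: FF_space Gen_FF)
qed auto

lemma X1_FF: "X1 \<in> borel_measurable (FF n)"
proof (rule measurableI)
  fix A :: "'a set" assume "A \<in> sets borel"
  then have "X1 -` A \<inter> space M \<in> Gen n" unfolding Gen_def by blast
  then show "X1 -` A \<inter> space (FF n) \<in> sets (FF n)" by (simp add: FF_space Gen_FF)
qed auto

lemma U_FF: "2 \<le> k \<Longrightarrow> k \<le> n \<Longrightarrow> U k \<in> measurable (FF n) (count_space {1..N})"
  unfolding measurable_count_space_eq2_countable
proof safe
  assume "2 \<le> k" "k \<le> n"
  fix a
  have "U k -` {a} \<inter> space M \<in> Gen n" unfolding Gen_def using \<open>2 \<le> k\<close> \<open>k \<le> n\<close> by blast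
  then show "U k -` {a} \<inter> space (FF n) \<in> sets (FF n)" by (simp add: FF_space Gen_FF)
next
  fix x assume "2 \<le> k" "x \<in> space (FF n)"
  then show "U k x \<in> {1..N}" using Ur by (simp add: FF_space)
qed

lemma FF_M: "g \<in> borel_measurable (FF n) \<Longrightarrow> g \<in> borel_measurable M"
  using measurable_from_subalg[OF subalg] by blast

lemma gr_meas: "k \<in> {1..N} \<Longrightarrow> gr k \<in> borel_measurable borel"
  using diff grad_measurable by blast

lemma meas_FF:
  "m \<le> n \<Longrightarrow> X m \<in> borel_measurable (FF n) \<and> (\<forall>k. (\<lambda>w. Phi m w k) \<in> borel_measurable (FF n))"
proof (induction m)
  case 0
  then show ?case using X0_FF by (simp add: saga_X_def saga_phi_def)
next
  case (Suc m)
  show ?case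
  proof (cases "m = 0")
    case True
    then show ?thesis using X0_FF X1_FF by (simp add: saga_X_def saga_phi_def)
  next
    case False
    then have m1: "1 \<le> m" by simp
    from Suc have IH: "X m \<in> borel_measurable (FF n)" "\<And>k. (\<lambda>w. Phi m w k) \<in> borel_measurable (FF n)" by auto
    have Uc: "U (Suc m) \<in> measurable (FF n) (count_space {1..N})" using m1 Suc.prems by (intro U_FF) auto
    have c: "countable {1..N::nat}" by simp
    have A: "(\<lambda>w. gr (U (Suc m) w) (X m w)) \<in> borel_measurable (FF n)"
      by (rule measurable_compose_countable'[OF _ Uc c]) (rule measurable_compose[OF IH(1) gr_meas])
    have B: "(\<lambda>w. gr (U (Suc m) w) (Phi m w (U (Suc m) w))) \<in> borel_measurable (FF n)"
      by (rule measurable_compose_countable'[OF _ Uc c]) (rule measurable_compose[OF IH(2) gr_meas])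
    have C: "(\<lambda>w. \<Sum>k=1..N. gr k (Phi m w k)) \<in> borel_measurable (FF n)"
      by (rule borel_measurable_sum) (rule measurable_compose[OF IH(2) gr_meas])
    have "X (Suc m) = (\<lambda>w. X m w - gamma m *\<^sub>R (gr (U (Suc m) w) (X m w)
          - lam *\<^sub>R (gr (U (Suc m) w) (Phi m w (U (Suc m) w)) - (1 / real N) *\<^sub>R (\<Sum>k=1..N. gr k (Phi m w k)))))"
      using X_Suc[OF m1] by (rule ext)
    also have "\<dots> \<in> borel_measurable (FF n)" using IH(1) A B C by measurable
    finally have 1: "X (Suc m) \<in> borel_measurable (FF n)" .
    have UF: "Measurable.pred (FF n) (\<lambda>w. U (Suc m) w = k)" for k
      using Uc by measurable
    have "(\<lambda>w. Phi (Suc m) w k) \<in> borel_measurable (FF n)" for k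
    proof -
      have "(\<lambda>w. Phi (Suc m) w k) = (\<lambda>w. if U (Suc m) w = k then X m w else Phi m w k)"
        by (rule ext) (simp add: Phi_Suc[OF m1])
      also have "\<dots> \<in> borel_measurable (FF n)"
        using IH UF by (intro measurable_If) auto
      finally show ?thesis .
    qed
    with 1 show ?thesis by blast
  qed
qed


lemma FF_M': "g \<in> measurable (FF n) K \<Longrightarrow> g \<in> measurable M K"
  using measurable_from_subalg[OF subalg] by blast

lemma X_meas: "X m \<in> borel_measurable M" and Phi_meas: "(\<lambda>w. Phi m w k) \<in> borel_measurable M"
  using meas_FF[of m m] FF_M by auto

lemma U_meas: "2 \<le> k \<Longrightarrow> U k \<in> measurable M (count_space {1..N})"
  using U_FF[of k k] FF_M' by blast

lemma gr_bound:
  assumes "k \<in> {1..N}"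
  shows "(norm (gr k y))\<^sup>2 \<le> (2 * (norm (gr k xs))\<^sup>2 + 4 * N * L * (norm xs)\<^sup>2) + (4 * N * L) * (norm y)\<^sup>2"
proof -
  have "(norm (gr k y - gr k xs))\<^sup>2 \<le> (\<Sum>k=1..N. (norm (gr k y - gr k xs))\<^sup>2)"
    using assms by (intro member_le_sum) auto
  also have "\<dots> = N * tau2 N f xs y" unfolding tau2_def using N1 by simp
  also have "\<dots> \<le> N * (L * (norm (y - xs))\<^sup>2)" using tau by (intro mult_left_mono) auto
  finally have 1: "(norm (gr k y - gr k xs))\<^sup>2 \<le> N * L * (norm (y - xs))\<^sup>2" by simp
  have 2: "(norm (y - xs))\<^sup>2 \<le> 2 * (norm y)\<^sup>2 + 2 * (norm xs)\<^sup>2" by (rule sq_diff_le)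
  have 3: "(norm (gr k y))\<^sup>2 \<le> 2 * (norm (gr k y - gr k xs))\<^sup>2 + 2 * (norm (gr k xs))\<^sup>2"
    using sq_add_le[of "gr k y - gr k xs" "gr k xs"] by simp
  have "N * L * (norm (y - xs))\<^sup>2 \<le> N * L * (2 * (norm y)\<^sup>2 + 2 * (norm xs)\<^sup>2)"
    using 2 Lpos by (intro mult_left_mono) auto
  with 1 3 show ?thesis by (simp add: algebra_simps)
qed

lemma sqi_gr: "sqi M Y \<Longrightarrow> k \<in> {1..N} \<Longrightarrow> sqi M (\<lambda>w. gr k (Y w))"
  by (rule sqi_comp[OF _ _ gr_meas gr_bound]) (use Lpos in \<open>auto intro: finite_measure_axioms\<close>)

lemma sqi_XPhi: "sqi M (X m) \<and> (\<forall>k. sqi M (\<lambda>w. Phi m w k))"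
proof (induction m)
  case 0
  then show ?case using X0i X0m by (simp add: saga_X_def saga_phi_def sqi_def)
next
  case (Suc m)
  show ?case
  proof (cases "m = 0")
    case True
    then show ?thesis using X0i X0m X1i X1m by (simp add: saga_X_def saga_phi_def sqi_def)
  next
    case False
    then have m1: "1 \<le> m" by simp
    from Suc have IH: "sqi M (X m)" "\<And>k. sqi M (\<lambda>w. Phi m w k)" by auto
    have Uc: "U (Suc m) \<in> measurable M (count_space {1..N})" using m1 by (intro U_meas) auto
    have fm: "finite_measure M" by (rule finite_measure_axioms)
    have A: "sqi M (\<lambda>w. gr (U (Suc m) w) (X m w))"
      by (rule sqi_sel[OF _ Uc]) (auto intro: sqi_gr IH)
    have B: "sqi M (\<lambda>w. gr (U (Suc m) w) (Phi m w (U (Suc m) w)))"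
      by (rule sqi_sel[OF _ Uc, where Y="\<lambda>j w. gr j (Phi m w j)"]) (auto intro: sqi_gr IH)
    have C: "sqi M (\<lambda>w. \<Sum>k=1..N. gr k (Phi m w k))"
      by (rule sqi_sum[OF _ _ fm]) (auto intro: sqi_gr IH)
    have "X (Suc m) = (\<lambda>w. X m w - gamma m *\<^sub>R (gr (U (Suc m) w) (X m w)
          - lam *\<^sub>R (gr (U (Suc m) w) (Phi m w (U (Suc m) w)) - (1 / real N) *\<^sub>R (\<Sum>k=1..N. gr k (Phi m w k)))))"
      using X_Suc[OF m1] by (rule ext)
    moreover have "sqi M \<dots>"
      by (intro sqi_diff sqi_scaleR IH A B C)
    ultimately have 1: "sqi M (X (Suc m))" by simp
    have "sqi M (\<lambda>w. Phi (Suc m) w k)" for k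
    proof -
      have "(\<lambda>w. Phi (Suc m) w k) = (\<lambda>w. if U (Suc m) w = k then X m w else Phi m w k)"
        by (rule ext) (simp add: Phi_Suc[OF m1])
      moreover have "sqi M \<dots>"
        using Uc by (intro sqi_if IH) measurable
      ultimately show ?thesis by simp
    qed
    with 1 show ?thesis by blast
  qed
qed


definition "EE i = (if i = 0 then {(\<lambda>w. (X0 w, X1 w)) -` B \<inter> space M | B. B \<in> sets borel}
                 else {U i -` B \<inter> space M | B. B \<subseteq> (UNIV :: nat set)})"

lemma indep_set_mono:
  assumes "indep_set A B" "A' \<subseteq> A" "B' \<subseteq> B" shows "indep_set A' B'"
  using assms unfolding indep_set_def
  by (rule_tac indep_sets_mono_sets) (auto split: bool.split)

lemma indep_FF: assumes n1: "1 \<le> n" shows "indep_set (sigma_sets (space M) (EE (Suc n))) (sets (FF n))"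
proof -
  define I where "I b = (if b then {Suc n} else {0} \<union> {2..n})" for b
  have "indep_sets EE (\<Union>b. I b)"
    using indep unfolding EE_def[abs_def] by (rule indep_sets_mono_index[rotated]) (use n1 in \<open>auto simp: I_def\<close>)
  moreover have "Int_stable (EE i)" for i
  proof (cases "i = 0")
    case True
    show ?thesis unfolding Int_stable_def EE_def using True
    proof (clarsimp)
      fix B B' :: "('a \<times> 'a) set" assume "B \<in> sets borel" "B' \<in> sets borel"
      then show "\<exists>C. (\<lambda>w. (X0 w, X1 w)) -` B \<inter> space M \<inter> ((\<lambda>w. (X0 w, X1 w)) -` B' \<inter> space M) =
                 (\<lambda>w. (X0 w, X1 w)) -` C \<inter> space M \<and> C \<in> sets borel"
        by (intro exI[of _ "B \<inter> B'"]) auto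
    qed
  next
    case False
    show ?thesis unfolding Int_stable_def EE_def using False
    proof (clarsimp)
      fix B B' :: "nat set"
      show "\<exists>C. U i -` B \<inter> space M \<inter> (U i -` B' \<inter> space M) = U i -` C \<inter> space M"
        by (intro exI[of _ "B \<inter> B'"]) auto
    qed
  qed
  moreover have "disjoint_family_on I UNIV"
    using n1 unfolding disjoint_family_on_def I_def by auto
  ultimately have "indep_sets (\<lambda>b. sigma_sets (space M) (\<Union>i\<in>I b. EE i)) UNIV"
    by (intro indep_sets_collect_sigma) auto
  moreover have "(\<lambda>b. sigma_sets (space M) (\<Union>i\<in>I b. EE i)) =
     case_bool (sigma_sets (space M) (EE (Suc n))) (sigma_sets (space M) (\<Union>i\<in>{0} \<union> {2..n}. EE i))"
    by (rule ext) (simp add: I_def split: bool.split)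
  ultimately have ind: "indep_set (sigma_sets (space M) (EE (Suc n))) (sigma_sets (space M) (\<Union>i\<in>{0} \<union> {2..n}. EE i))"
    unfolding indep_set_def by simp
  have "Gen n \<subseteq> sigma_sets (space M) (\<Union>i\<in>{0} \<union> {2..n}. EE i)"
  proof
    fix A assume "A \<in> Gen n"
    then consider (a) B where "B \<in> sets borel" "A = X0 -` B \<inter> space M"
      | (b) B where "B \<in> sets borel" "A = X1 -` B \<inter> space M"
      | (c) k j where "2 \<le> k" "k \<le> n" "A = U k -` {j} \<inter> space M"
      unfolding Gen_def by blast
    then have "A \<in> (\<Union>i\<in>{0} \<union> {2..n}. EE i)"
    proof cases
      case a
      have "B \<times> UNIV \<in> sets (borel :: ('a \<times> 'a) measure)"
        using a(1) by (subst borel_prod[symmetric]) auto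
      moreover have "A = (\<lambda>w. (X0 w, X1 w)) -` (B \<times> UNIV) \<inter> space M" using a(2) by auto
      ultimately show ?thesis unfolding EE_def by (intro UN_I[of 0]) auto
    next
      case b
      have "UNIV \<times> B \<in> sets (borel :: ('a \<times> 'a) measure)"
        using b(1) by (subst borel_prod[symmetric]) auto
      moreover have "A = (\<lambda>w. (X0 w, X1 w)) -` (UNIV \<times> B) \<inter> space M" using b(2) by auto
      ultimately show ?thesis unfolding EE_def by (intro UN_I[of 0]) auto
    next
      case c
      then show ?thesis unfolding EE_def by (intro UN_I[of k]) auto
    qed
    then show "A \<in> sigma_sets (space M) (\<Union>i\<in>{0} \<union> {2..n}. EE i)" by blast
  qed
  then have "sets (FF n) \<subseteq> sigma_sets (space M) (\<Union>i\<in>{0} \<union> {2..n}. EE i)"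
    unfolding FF_sets by (rule sigma_sets_mono)
  then show ?thesis by (rule indep_set_mono[OF ind subset_refl])
qed

lemma ind_FF:
  assumes Y: "Y \<in> borel_measurable (FF n)" "integrable M Y" and j: "j \<in> {1..N}" and n: "1 \<le> n"
  shows "(\<integral>w. indicator {w\<in>space M. U (Suc n) w = j} w * Y w \<partial>M) = (\<integral>w. Y w \<partial>M) / real N"
proof -
  define Z where "Z = (indicator {w\<in>space M. U (Suc n) w = j} :: 'w \<Rightarrow> real)"
  have Uc: "U (Suc n) \<in> measurable M (count_space {1..N})" using n by (intro U_meas) auto
  have Ev: "{w\<in>space M. U (Suc n) w = j} \<in> sets M" using Uc by measurable
  have Zm: "Z \<in> borel_measurable M" unfolding Z_def using Ev by simp
  have YM: "Y \<in> borel_measurable M" using Y(1) by (rule FF_M)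
  have "indep_var borel Z borel Y"
    unfolding indep_var_eq
  proof (intro conjI)
    show "random_variable borel Z" "random_variable borel Y" using Zm YM by auto
    show "indep_set (sigma_sets (space M) {Z -` A \<inter> space M |A. A \<in> sets borel})
                    (sigma_sets (space M) {Y -` A \<inter> space M |A. A \<in> sets borel})"
    proof (rule indep_set_mono[OF indep_FF[OF n]])
      show "sigma_sets (space M) {Z -` A \<inter> space M |A. A \<in> sets borel} \<subseteq> sigma_sets (space M) (EE (Suc n))"
      proof (rule sigma_sets_mono')
        show "{Z -` A \<inter> space M |A. A \<in> sets borel} \<subseteq> EE (Suc n)"
        proof clarify
          fix A :: "real set"
          have "Z -` A \<inter> space M = U (Suc n) -` {k. (if k = j then 1 else 0) \<in> A} \<inter> space M"
            unfolding Z_def by (auto simp: indicator_def split: if_splits)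
          then have "Z -` A \<inter> space M \<in> {U (Suc n) -` B \<inter> space M |B. B \<subseteq> (UNIV :: nat set)}"
            by blast
          then show "Z -` A \<inter> space M \<in> EE (Suc n)" unfolding EE_def by simp
        qed
      qed
      have "{Y -` A \<inter> space M |A. A \<in> sets borel} \<subseteq> sets (FF n)"
        using measurable_sets[OF Y(1)] FF_space by auto
      then show "sigma_sets (space M) {Y -` A \<inter> space M |A. A \<in> sets borel} \<subseteq> sets (FF n)"
        unfolding FF_sets by (rule sigma_sets_mono)
    qed
  qed
  moreover have "integrable M Z" unfolding Z_def using Ev by (intro integrable_real_indicator) (auto simp: emeasure_eq_measure)
  ultimately have "(\<integral>w. Z w * Y w \<partial>M) = (\<integral>w. Z w \<partial>M) * (\<integral>w. Y w \<partial>M)"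
    using Y(2) by (rule indep_var_lebesgue_integral)
  moreover have "(\<integral>w. Z w \<partial>M) = 1 / real N"
    unfolding Z_def using Up j n by (simp add: Int_absorb2 Ev sets.sets_into_space)
  ultimately show ?thesis unfolding Z_def by simp
qed

end



context saga begin

definition "hA n j w = (1 / real N) * (\<Sum>k=1..N. (norm (gr k (if k = j then X n w else Phi n w k) - gr k xs))\<^sup>2)"
definition "Xj n j w = X n w - gamma n *\<^sub>R (gr j (X n w) - lam *\<^sub>R (gr j (Phi n w j) - (1 / real N) *\<^sub>R (\<Sum>k=1..N. gr k (Phi n w k))))"
definition "hT n j w = (norm (Xj n j w - xs))\<^sup>2 + 3 * real N * (gamma n)\<^sup>2 * hA n j w"

lemma A_Suc: "1 \<le> n \<Longrightarrow> saga_A N f lam gamma X0 X1 U xs (Suc n) w = hA n (U (Suc n) w) w"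
  unfolding saga_A_def hA_def by (simp add: Phi_Suc fun_upd_apply)

lemma T_Suc: "1 \<le> n \<Longrightarrow> saga_T N f lam gamma X0 X1 U xs (Suc n) w = hT n (U (Suc n) w) w"
  unfolding saga_T_def hT_def Xj_def by (simp add: A_Suc X_Suc)

lemma sel_FF: "(\<lambda>w. if k = j then X n w else Phi n w k) \<in> borel_measurable (FF n)"
  using meas_FF[of n n] by (cases "k = j") auto

lemma sel_sqi: "sqi M (\<lambda>w. if k = j then X n w else Phi n w k)"
  using sqi_XPhi[of n] by (cases "k = j") auto

lemma hA_FF: "hA n j \<in> borel_measurable (FF n)"
proof -
  have "(\<lambda>w. gr k (if k = j then X n w else Phi n w k)) \<in> borel_measurable (FF n)" if "k \<in> {1..N}" for k
    by (rule measurable_compose[OF sel_FF gr_meas[OF that]])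
  then show ?thesis unfolding hA_def[abs_def]
    by (intro borel_measurable_times borel_measurable_const borel_measurable_sum) auto
qed

lemma hA_int: "integrable M (hA n j)"
proof -
  have "sqi M (\<lambda>w. gr k (if k = j then X n w else Phi n w k) - gr k xs)" if "k \<in> {1..N}" for k
    by (intro sqi_diff sqi_gr[OF sel_sqi that] sqi_const finite_measure_axioms)
  then show ?thesis unfolding hA_def[abs_def] sqi_def
    by (intro integrable_mult_right Bochner_Integration.integrable_sum) auto
qed

lemma Xj_FF: "j \<in> {1..N} \<Longrightarrow> Xj n j \<in> borel_measurable (FF n)"
proof -
  assume j: "j \<in> {1..N}"
  have m: "X n \<in> borel_measurable (FF n)" "\<And>k. (\<lambda>w. Phi n w k) \<in> borel_measurable (FF n)"
    using meas_FF[of n n] by auto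
  have a: "(\<lambda>w. gr j (X n w)) \<in> borel_measurable (FF n)" by (rule measurable_compose[OF m(1) gr_meas[OF j]])
  have b: "(\<lambda>w. gr j (Phi n w j)) \<in> borel_measurable (FF n)" by (rule measurable_compose[OF m(2) gr_meas[OF j]])
  have c: "(\<lambda>w. \<Sum>k=1..N. gr k (Phi n w k)) \<in> borel_measurable (FF n)"
    by (rule borel_measurable_sum) (rule measurable_compose[OF m(2) gr_meas])
  show ?thesis unfolding Xj_def[abs_def] using m(1) a b c by measurable
qed

lemma Xj_sqi: "j \<in> {1..N} \<Longrightarrow> sqi M (\<lambda>w. Xj n j w - xs)"
proof -
  assume j: "j \<in> {1..N}"
  have fm: "finite_measure M" by (rule finite_measure_axioms)
  have I: "sqi M (X n)" "\<And>k. sqi M (\<lambda>w. Phi n w k)" using sqi_XPhi[of n] by auto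
  have c: "sqi M (\<lambda>w. \<Sum>k=1..N. gr k (Phi n w k))"
    by (rule sqi_sum[OF _ _ fm]) (auto intro: sqi_gr I)
  show ?thesis unfolding Xj_def
    by (intro sqi_diff sqi_scaleR sqi_gr[OF _ j] I c sqi_const[OF fm])
qed

lemma hT_FF: "j \<in> {1..N} \<Longrightarrow> hT n j \<in> borel_measurable (FF n)"
  unfolding hT_def[abs_def] using Xj_FF hA_FF by measurable

lemma hT_int: "j \<in> {1..N} \<Longrightarrow> integrable M (hT n j)"
  unfolding hT_def[abs_def] using Xj_sqi[of j n] hA_int[of n j] unfolding sqi_def
  by (intro Bochner_Integration.integrable_add integrable_mult_right) auto


lemma ce_select:
  assumes n: "1 \<le> n" and hF: "\<And>j. j \<in> {1..N} \<Longrightarrow> h j \<in> borel_measurable (FF n)"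
    and hI: "\<And>j. j \<in> {1..N} \<Longrightarrow> integrable M (h j)"
  shows "AE w in M. real_cond_exp M (FF n) (\<lambda>w. h (U (Suc n) w) w) w = (1 / real N) * (\<Sum>j=1..N. h j w)"
proof (rule sigma_finite_subalgebra.cond_exp_select[OF sfs])
  show "U (Suc n) \<in> measurable M (count_space UNIV)" using Um n by auto
  show "\<And>w. w \<in> space M \<Longrightarrow> U (Suc n) w \<in> {1..N}" using Ur n by auto
  show "\<And>Y j. Y \<in> borel_measurable (FF n) \<Longrightarrow> integrable M Y \<Longrightarrow> j \<in> {1..N} \<Longrightarrow>
        (\<integral>w. indicator {w\<in>space M. U (Suc n) w = j} w * Y w \<partial>M) = (\<integral>w. Y w \<partial>M) / real N"
    using ind_FF n by blast
qed (use hF hI in auto)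

lemma cbar: "(\<Sum>j=1..N. gr j xs) = 0"
proof -
  have "(1 / real N) *\<^sub>R (\<Sum>j=1..N. gr j xs) = 0" using gavg grad_avg_eq[OF diff] by simp
  then show ?thesis using N1 by simp
qed

lemma pw_A: "(1 / real N) * (\<Sum>j=1..N. hA n j w)
   = (1 / real N) * tau2 N f xs (X n w) + (1 - 1 / real N) * saga_A N f lam gamma X0 X1 U xs n w"
proof -
  have "hA n j w = (1 / real N) * (\<Sum>k=1..N. (if k = j then (norm (gr k (X n w) - gr k xs))\<^sup>2 else (norm (gr k (Phi n w k) - gr k xs))\<^sup>2))" for j
    unfolding hA_def by (intro arg_cong2[where f="(*)"] sum.cong) auto
  then show ?thesis
    unfolding tau2_def saga_A_def using alg_A[OF N1] by simp
qed

lemma alg_loc: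
  fixes y :: 'a and gg :: real and p :: "nat \<Rightarrow> 'a"
  shows "(1 / real N) * (\<Sum>j=1..N. (norm (y - gg *\<^sub>R (gr j y - lam *\<^sub>R (gr j (p j) - (1 / real N) *\<^sub>R (\<Sum>k=1..N. gr k (p k)))) - xs))\<^sup>2)
     \<le> (norm (y - xs))\<^sup>2 - 2 * gg * inner (y - xs) ((1 / real N) *\<^sub>R (\<Sum>j=1..N. gr j y))
       + 3 * gg\<^sup>2 * ((1 / real N) * (\<Sum>j=1..N. (norm (gr j y - gr j xs))\<^sup>2) + (1 / real N) * (\<Sum>j=1..N. (norm (gr j xs))\<^sup>2)
                     + (1 / real N) * (\<Sum>j=1..N. (norm (gr j (p j) - gr j xs))\<^sup>2))"
  by (rule main_alg[OF N1 cbar lam0 lam1])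

lemma pw_T: "(1 / real N) * (\<Sum>j=1..N. hT n j w)
   \<le> (norm (X n w - xs))\<^sup>2 - 2 * gamma n * inner (X n w - xs) (grad_avg N f (X n w))
       + 3 * (gamma n)\<^sup>2 * (tau2 N f xs (X n w) + theta_star N f xs + saga_A N f lam gamma X0 X1 U xs n w)
       + 3 * real N * (gamma n)\<^sup>2 * ((1 / real N) * tau2 N f xs (X n w) + (1 - 1 / real N) * saga_A N f lam gamma X0 X1 U xs n w)"
proof -
  have "(1 / real N) * (\<Sum>j=1..N. hT n j w) = (1 / real N) * (\<Sum>j=1..N. (norm (Xj n j w - xs))\<^sup>2)
     + 3 * real N * (gamma n)\<^sup>2 * ((1 / real N) * (\<Sum>j=1..N. hA n j w))"
    unfolding hT_def by (simp add: sum.distrib sum_distrib_left algebra_simps)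
  also have "\<dots> = (1 / real N) * (\<Sum>j=1..N. (norm (Xj n j w - xs))\<^sup>2)
     + 3 * real N * (gamma n)\<^sup>2 * ((1 / real N) * tau2 N f xs (X n w) + (1 - 1 / real N) * saga_A N f lam gamma X0 X1 U xs n w)"
    unfolding pw_A ..
  finally have e: "(1 / real N) * (\<Sum>j=1..N. hT n j w) = (1 / real N) * (\<Sum>j=1..N. (norm (Xj n j w - xs))\<^sup>2)
     + 3 * real N * (gamma n)\<^sup>2 * ((1 / real N) * tau2 N f xs (X n w) + (1 - 1 / real N) * saga_A N f lam gamma X0 X1 U xs n w)" .
  have i: "(1 / real N) * (\<Sum>j=1..N. (norm (Xj n j w - xs))\<^sup>2)
     \<le> (norm (X n w - xs))\<^sup>2 - 2 * gamma n * inner (X n w - xs) (grad_avg N f (X n w))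
       + 3 * (gamma n)\<^sup>2 * (tau2 N f xs (X n w) + theta_star N f xs + saga_A N f lam gamma X0 X1 U xs n w)"
  proof -
    have r1: "tau2 N f xs (X n w) = (1 / real N) * (\<Sum>j=1..N. (norm (gr j (X n w) - gr j xs))\<^sup>2)"
      unfolding tau2_def ..
    have r2: "theta_star N f xs = (1 / real N) * (\<Sum>j=1..N. (norm (gr j xs))\<^sup>2)"
      unfolding theta_star_def ..
    have r3: "saga_A N f lam gamma X0 X1 U xs n w = (1 / real N) * (\<Sum>j=1..N. (norm (gr j (Phi n w j) - gr j xs))\<^sup>2)"
      unfolding saga_A_def ..
    have r4: "grad_avg N f (X n w) = (1 / real N) *\<^sub>R (\<Sum>j=1..N. gr j (X n w))"
      by (rule grad_avg_eq[OF diff])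
    show ?thesis unfolding Xj_def r1 r2 r3 r4 by (rule alg_loc)
  qed
  show ?thesis unfolding e using i by linarith
qed


lemma main_loc:
  assumes n: "2 \<le> n"
  shows "(AE w in M. real_cond_exp M (FF n) (saga_A N f lam gamma X0 X1 U xs (Suc n)) w
          = (1 / real N) * tau2 N f xs (X n w) + (1 - 1 / real N) * saga_A N f lam gamma X0 X1 U xs n w)
   \<and> (AE w in M. real_cond_exp M (FF n) (saga_T N f lam gamma X0 X1 U xs (Suc n)) w
          \<le> (1 + 6 * L * (gamma n)\<^sup>2) * saga_T N f lam gamma X0 X1 U xs n w
            - 2 * gamma n * inner (X n w - xs) (grad_avg N f (X n w))
            + 3 * (gamma n)\<^sup>2 * theta_star N f xs)"
proof
  have n1: "1 \<le> n" using n by simp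
  have eqA: "saga_A N f lam gamma X0 X1 U xs (Suc n) = (\<lambda>w. hA n (U (Suc n) w) w)"
    by (rule ext) (rule A_Suc[OF n1])
  have eqT: "saga_T N f lam gamma X0 X1 U xs (Suc n) = (\<lambda>w. hT n (U (Suc n) w) w)"
    by (rule ext) (rule T_Suc[OF n1])
  have ceA: "AE w in M. real_cond_exp M (FF n) (\<lambda>w. hA n (U (Suc n) w) w) w = (1 / real N) * (\<Sum>j=1..N. hA n j w)"
    by (rule ce_select[OF n1]) (auto intro: hA_FF hA_int)
  then show "AE w in M. real_cond_exp M (FF n) (saga_A N f lam gamma X0 X1 U xs (Suc n)) w
          = (1 / real N) * tau2 N f xs (X n w) + (1 - 1 / real N) * saga_A N f lam gamma X0 X1 U xs n w"
    unfolding eqA pw_A .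
  have ceT: "AE w in M. real_cond_exp M (FF n) (\<lambda>w. hT n (U (Suc n) w) w) w = (1 / real N) * (\<Sum>j=1..N. hT n j w)"
    by (rule ce_select[OF n1]) (auto intro: hT_FF hT_int)
  have gle: "gamma n \<le> gamma (n - 1)" using gmono n by (metis One_nat_def Suc_diff_Suc Suc_le_lessD diff_zero le_diff_iff' less_one linorder_not_less n1 nat_le_linear one_add_one plus_1_eq_Suc)
  have gp: "0 < gamma n" using gpos n by auto
  have pt: "(1 / real N) * (\<Sum>j=1..N. hT n j w) \<le> (1 + 6 * L * (gamma n)\<^sup>2) * saga_T N f lam gamma X0 X1 U xs n w
            - 2 * gamma n * inner (X n w - xs) (grad_avg N f (X n w))
            + 3 * (gamma n)\<^sup>2 * theta_star N f xs" for w
  proof -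
    have A0: "0 \<le> saga_A N f lam gamma X0 X1 U xs n w" unfolding saga_A_def by (simp add: sum_nonneg)
    have tl: "tau2 N f xs (X n w) \<le> L * (norm (X n w - xs))\<^sup>2" using tau by blast
    have NN: "real N \<ge> 1" using N1 by simp
    show ?thesis
      using order_trans[OF pw_T fin_alg[OF NN A0 tl gp gle Lpos]] unfolding saga_T_def by simp
  qed
  show "AE w in M. real_cond_exp M (FF n) (saga_T N f lam gamma X0 X1 U xs (Suc n)) w
          \<le> (1 + 6 * L * (gamma n)\<^sup>2) * saga_T N f lam gamma X0 X1 U xs n w
            - 2 * gamma n * inner (X n w - xs) (grad_avg N f (X n w))
            + 3 * (gamma n)\<^sup>2 * theta_star N f xs"
    using ceT unfolding eqT by eventually_elim (use pt in simp)
qed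

end

theorem mainTheorem2:
  fixes M :: "'w measure" and N :: nat and f :: "nat \<Rightarrow> 'a::euclidean_space \<Rightarrow> real"
    and lam :: real and gamma :: "nat \<Rightarrow> real" and X0 X1 :: "'w \<Rightarrow> 'a"
    and U :: "nat \<Rightarrow> 'w \<Rightarrow> nat" and xs :: 'a and L :: real
  assumes "prob_space M"
    and "N \<ge> 1"
    and "\<forall>k\<in>{1..N}. \<forall>x. f k differentiable (at x)"
    and "0 \<le> lam" and "lam \<le> 1"
    and "\<forall>n\<ge>1. gamma n > 0"
    and "\<forall>n\<ge>1. gamma (Suc n) \<le> gamma n"
    and "X0 \<in> borel_measurable M" and "X1 \<in> borel_measurable M"
    and "integrable M (\<lambda>w. (norm (X0 w))\<^sup>2)" and "integrable M (\<lambda>w. (norm (X1 w))\<^sup>2)"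
    and "\<forall>n\<ge>2. U n \<in> measurable M (count_space UNIV)"
    and "\<forall>n\<ge>2. \<forall>w\<in>space M. U n w \<in> {1..N}"
    and "\<forall>n\<ge>2. \<forall>j\<in>{1..N}. measure M {w \<in> space M. U n w = j} = 1 / real N"
    and "prob_space.indep_sets M
           (\<lambda>i. if i = 0 then {(\<lambda>w. (X0 w, X1 w)) -` B \<inter> space M | B. B \<in> sets borel}
                 else {U i -` B \<inter> space M | B. B \<subseteq> (UNIV :: nat set)})
           ({0} \<union> {2..})"
    and "grad_avg N f xs = 0"
    and "L > 0"
    and "\<forall>x. tau2 N f xs x \<le> L * (norm (x - xs))\<^sup>2"
  shows "\<forall>n\<ge>2.
     (AE w in M. real_cond_exp M (saga_filtration M X0 X1 U n)
                   (saga_A N f lam gamma X0 X1 U xs (Suc n)) w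
          = (1 / real N) * tau2 N f xs (saga_X N f lam gamma X0 X1 U n w)
            + (1 - 1 / real N) * saga_A N f lam gamma X0 X1 U xs n w)
   \<and> (AE w in M. real_cond_exp M (saga_filtration M X0 X1 U n)
                   (saga_T N f lam gamma X0 X1 U xs (Suc n)) w
          \<le> (1 + 6 * L * (gamma n)\<^sup>2) * saga_T N f lam gamma X0 X1 U xs n w
            - 2 * gamma n * inner (saga_X N f lam gamma X0 X1 U n w - xs)
                                  (grad_avg N f (saga_X N f lam gamma X0 X1 U n w))
            + 3 * (gamma n)\<^sup>2 * theta_star N f xs)"
  proof -
  interpret saga M N f lam gamma X0 X1 U xs L
    unfolding saga_def saga_axioms_def using assms by auto
  show ?thesis using main_loc by blast
qed

end
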